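(* Let $\mathcal A$ be an associative unital algebra, $a_1,\dots,a_4\in\mathcal A$ invertible, $A_i=a_ia_{i+1}a_{i+2}a_{i+3}$ (indices mod $4$), with $1+A_i$ invertible for all $i$, and define $$b_1=(1+A_3^{-1})a_3,\quad b_2=(1+A_4)^{-1}a_4,\quad b_3=(1+A_1^{-1})a_1,\quad b_4=(1+A_2)^{-1}a_2.$$ Then in the cyclic quotient of noncommutative differential forms $$\{a_4,a_1\}-\{a_1,a_2\}+\{a_2,a_3\}-\{a_3,a_4\}=\{b_1,b_2\}-\{b_2,b_3\}+\{b_3,b_4\}-\{b_4,b_1\}.$$ Equivalently, the canonical $2$-form $\Omega_\Gamma$ of a decorated bipartite ribbon graph is invariant under two by two moves.
   Context: $\Omega^\bullet\mathcal A$ is the noncommutative de Rham algebra of $\mathcal A$ (generated by $a\in\mathcal A$ in degree $0$ and $da$ in degree $1$, Leibniz rule, $d^2=0$), and the cyclic quotient is $\Omega^\bullet\mathcal A/[\Omega^\bullet\mathcal A,\Omega^\bullet\mathcal A]$ by graded commutators. For invertible $a,b$, $\{a,b\}$ denotes the class of $da\,db\,b^{-1}a^{-1}$. The formulas for $b_i$ describe the change of edge coordinates under a two by two move of bipartite ribbon graphs. *)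

theory Defs
  imports Main "HOL-Library.Poly_Mapping"
begin

definition invertible :: "'a::ring_1 \<Rightarrow> bool" where
  "invertible a \<longleftrightarrow> (\<exists>x. a * x = 1 \<and> x * a = 1)"

definition uinv :: "'a::ring_1 \<Rightarrow> 'a" where
  "uinv a = (SOME x. a * x = 1 \<and> x * a = 1)"

text \<open>Over the ground ring of integers, Omega^2 A is A (x) Abar (x) Abar with Abar = A / Z1;
  the element a0 (x) a1 (x) a2 corresponds to the form a0 da1 da2.\<close>

definition fm :: "'a \<Rightarrow> 'a \<Rightarrow> 'a \<Rightarrow> ('a \<times> 'a \<times> 'a) \<Rightarrow>\<^sub>0 int" where
  "fm a0 a1 a2 = Poly_Mapping.single (a0, a1, a2) 1"

text \<open>The subgroup of relations: those defining Omega^2 (multilinearity, d1 = 0) together with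
  graded commutators of degree 2, namely [x, a0 da1 da2] for x in Omega^0 and
  [a0 da1, b0 db1] = (a0 da1)(b0 db1) + (b0 db1)(a0 da1), products being put into normal form
  by the Leibniz rule.  Quotienting by it yields Omega^2 A / [Omega A, Omega A] in degree 2.\<close>

inductive_set cyc_rel :: "(('a::ring_1 \<times> 'a \<times> 'a) \<Rightarrow>\<^sub>0 int) set" where
  zero: "0 \<in> cyc_rel"
| diff: "x \<in> cyc_rel \<Longrightarrow> y \<in> cyc_rel \<Longrightarrow> x - y \<in> cyc_rel"
| add0: "fm (a + a') b c - fm a b c - fm a' b c \<in> cyc_rel"
| add1: "fm a (b + b') c - fm a b c - fm a b' c \<in> cyc_rel"
| add2: "fm a b (c + c') - fm a b c - fm a b c' \<in> cyc_rel"
| unit1: "fm a 1 c \<in> cyc_rel"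
| unit2: "fm a b 1 \<in> cyc_rel"
| comm02: "fm (x * a0) a1 a2 - (fm a0 a1 (a2 * x) - fm a0 (a1 * a2) x + fm (a0 * a1) a2 x) \<in> cyc_rel"
| comm11: "fm a0 (a1 * b0) b1 - fm (a0 * a1) b0 b1 + fm b0 (b1 * a0) a1 - fm (b0 * b1) a0 a1 \<in> cyc_rel"

definition cyc_eq :: "(('a::ring_1 \<times> 'a \<times> 'a) \<Rightarrow>\<^sub>0 int) \<Rightarrow> (('a \<times> 'a \<times> 'a) \<Rightarrow>\<^sub>0 int) \<Rightarrow> bool" where
  "cyc_eq x y \<longleftrightarrow> x - y \<in> cyc_rel"

text \<open>The form da db c in normal form: da d(bc) - d(ab) dc + a db dc.\<close>
definition dd_times :: "'a::ring_1 \<Rightarrow> 'a \<Rightarrow> 'a \<Rightarrow> ('a \<times> 'a \<times> 'a) \<Rightarrow>\<^sub>0 int" where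
  "dd_times a b c = fm 1 a (b * c) - fm 1 (a * b) c + fm a b c"

text \<open>{a,b} = da db b^-1 a^-1 (a representative of its class).\<close>
definition curly :: "'a::ring_1 \<Rightarrow> 'a \<Rightarrow> ('a \<times> 'a \<times> 'a) \<Rightarrow>\<^sub>0 int" where
  "curly a b = dd_times a b (uinv b * uinv a)"

end

theory Submission
  imports Defs
begin


lemma cyc_rel_neg: "x \<in> cyc_rel \<Longrightarrow> - x \<in> cyc_rel"
  using cyc_rel.diff[OF cyc_rel.zero, of x] by simp

lemma cyc_rel_add: "x \<in> cyc_rel \<Longrightarrow> y \<in> cyc_rel \<Longrightarrow> x + y \<in> cyc_rel"
  using cyc_rel.diff[of x "- y"] cyc_rel_neg[of y] by simp

lemma cyc_eq_refl: "cyc_eq x x" by (simp add: cyc_eq_def cyc_rel.zero)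
lemma cyc_eq_sym: "cyc_eq x y \<Longrightarrow> cyc_eq y x"
  unfolding cyc_eq_def using cyc_rel_neg[of "x - y"] by simp
lemma cyc_eq_trans: "cyc_eq x y \<Longrightarrow> cyc_eq y z \<Longrightarrow> cyc_eq x z"
  unfolding cyc_eq_def using cyc_rel_add[of "x - y" "y - z"] by simp

lemma equivp_cyc_eq: "equivp (cyc_eq :: (('a::ring_1 \<times> 'a \<times> 'a) \<Rightarrow>\<^sub>0 int) \<Rightarrow> _)"
  by (rule equivpI) (auto intro: reflpI sympI transpI cyc_eq_refl cyc_eq_sym cyc_eq_trans)

typedef (overloaded) ('a::ring_1) cf = "{c. \<exists>x::('a \<times> 'a \<times> 'a) \<Rightarrow>\<^sub>0 int. c = cyc_eq x}"
  by blast

definition cls :: "(('a::ring_1 \<times> 'a \<times> 'a) \<Rightarrow>\<^sub>0 int) \<Rightarrow> 'a cf" where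
  "cls x = Abs_cf (cyc_eq x)"

lemma cls_eq_iff: "cls x = cls y \<longleftrightarrow> cyc_eq x y"
proof
  assume "cls x = cls y"
  then have "cyc_eq x = cyc_eq y"
    unfolding cls_def by (subst (asm) Abs_cf_inject) auto
  then show "cyc_eq x y" using equivp_reflp[OF equivp_cyc_eq, of y] by simp
next
  assume "cyc_eq x y"
  then have "cyc_eq x = cyc_eq y"
    by (intro ext iffI) (blast intro: cyc_eq_trans cyc_eq_sym)+
  then show "cls x = cls y" unfolding cls_def by simp
qed

lemma cf_cases: obtains x where "c = cls x"
proof -
  obtain x where "Rep_cf c = cyc_eq x" using Rep_cf by blast
  then have "c = cls x" unfolding cls_def by (metis Rep_cf_inverse)
  then show ?thesis using that by blast
qed

definition rep :: "'a::ring_1 cf \<Rightarrow> ('a \<times> 'a \<times> 'a) \<Rightarrow>\<^sub>0 int" where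
  "rep c = (SOME x. c = cls x)"

lemma cls_rep: "cls (rep c) = c"
proof -
  obtain x where "c = cls x" by (rule cf_cases)
  then have "c = cls (rep c)" unfolding rep_def by (rule someI)
  then show ?thesis by simp
qed

lemma cls_relI: "cyc_eq x y \<Longrightarrow> cls x = cls y" by (simp add: cls_eq_iff)

lemma cyc_eq_add: "cyc_eq x x' \<Longrightarrow> cyc_eq y y' \<Longrightarrow> cyc_eq (x + y) (x' + y')"
  unfolding cyc_eq_def using cyc_rel_add[of "x - x'" "y - y'"] by (simp add: algebra_simps)
lemma cyc_eq_neg: "cyc_eq x x' \<Longrightarrow> cyc_eq (- x) (- x')"
  unfolding cyc_eq_def using cyc_rel_neg[of "x - x'"] by (simp add: algebra_simps)
lemma cyc_eq_diff: "cyc_eq x x' \<Longrightarrow> cyc_eq y y' \<Longrightarrow> cyc_eq (x - y) (x' - y')"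
  using cyc_eq_add[of x x' "-y" "-y'"] cyc_eq_neg[of y y'] by simp

lemma rep_cls: "cyc_eq (rep (cls x)) x"
  using cls_rep[of "cls x"] by (simp add: cls_eq_iff)

instantiation cf :: (ring_1) ab_group_add
begin
definition zero_cf :: "'a cf" where "zero_cf = cls 0"
definition plus_cf :: "'a cf \<Rightarrow> 'a cf \<Rightarrow> 'a cf" where "plus_cf c d = cls (rep c + rep d)"
definition uminus_cf :: "'a cf \<Rightarrow> 'a cf" where "uminus_cf c = cls (- rep c)"
definition minus_cf :: "'a cf \<Rightarrow> 'a cf \<Rightarrow> 'a cf" where "minus_cf c d = cls (rep c - rep d)"

lemma cls_add: "cls (x + y) = cls x + cls y"
  unfolding plus_cf_def by (intro cls_relI cyc_eq_add) (rule cyc_eq_sym[OF rep_cls])+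
lemma cls_neg: "cls (- x) = - cls x"
  unfolding uminus_cf_def by (intro cls_relI cyc_eq_neg) (rule cyc_eq_sym[OF rep_cls])+
lemma cls_diff: "cls (x - y) = cls x - cls y"
  unfolding minus_cf_def by (intro cls_relI cyc_eq_diff) (rule cyc_eq_sym[OF rep_cls])+

instance
proof
  fix a b c :: "'a cf"
  obtain x where x: "a = cls x" by (rule cf_cases)
  obtain y where y: "b = cls y" by (rule cf_cases)
  obtain z where z: "c = cls z" by (rule cf_cases)
  show "a + b + c = a + (b + c)" unfolding x y z cls_add[symmetric] by (simp add: add.assoc)
  show "a + b = b + a" unfolding x y cls_add[symmetric] by (simp add: add.commute)
  show "0 + a = a" unfolding x zero_cf_def cls_add[symmetric] by simp
  show "- a + a = 0" unfolding x zero_cf_def cls_neg[symmetric] cls_add[symmetric] by simp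
  show "a - b = a + - b" unfolding x y cls_neg[symmetric] cls_add[symmetric] cls_diff[symmetric] by simp
qed
end

lemma cls_zero: "cls 0 = 0" by (simp add: zero_cf_def)

lemma cls_rel: "r \<in> cyc_rel \<Longrightarrow> cls r = 0"
  unfolding zero_cf_def by (simp add: cls_eq_iff cyc_eq_def)

definition F :: "'a::ring_1 \<Rightarrow> 'a \<Rightarrow> 'a \<Rightarrow> 'a cf" where
  "F a b c = cls (fm a b c)"

lemma F_add0: "F (a + a') b c = F a b c + F a' b c"
  using cls_rel[OF cyc_rel.add0[of a a' b c]] by (simp add: F_def cls_diff diff_eq_eq ac_simps)
lemma F_add1: "F a (b + b') c = F a b c + F a b' c"
  using cls_rel[OF cyc_rel.add1[of a b b' c]] by (simp add: F_def cls_diff diff_eq_eq ac_simps)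
lemma F_add2: "F a b (c + c') = F a b c + F a b c'"
  using cls_rel[OF cyc_rel.add2[of a b c c']] by (simp add: F_def cls_diff diff_eq_eq ac_simps)
lemma F_unit1: "F a 1 c = 0"
  using cls_rel[OF cyc_rel.unit1[of a c]] by (simp add: F_def)
lemma F_unit2: "F a b 1 = 0"
  using cls_rel[OF cyc_rel.unit2[of a b]] by (simp add: F_def)
lemma F_comm02: "F (x * a0) a1 a2 = F a0 a1 (a2 * x) - F a0 (a1 * a2) x + F (a0 * a1) a2 x"
  using cls_rel[OF cyc_rel.comm02[of x a0 a1 a2]] by (simp add: F_def cls_diff cls_add)
lemma F_comm11: "F a0 (a1 * b0) b1 - F (a0 * a1) b0 b1 + F b0 (b1 * a0) a1 - F (b0 * b1) a0 a1 = 0"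
  using cls_rel[OF cyc_rel.comm11[of a0 a1 b0 b1]] by (simp add: F_def cls_diff cls_add)

lemma F_zero0: "F 0 b c = 0" using F_add0[of 0 0 b c] by simp
lemma F_zero1: "F a 0 c = 0" using F_add1[of a 0 0 c] by simp
lemma F_zero2: "F a b 0 = 0" using F_add2[of a b 0 0] by simp
lemma F_neg0: "F (- a) b c = - F a b c" using F_add0[of a "-a" b c] by (simp add: F_zero0 eq_neg_iff_add_eq_0 add.commute)
lemma F_neg1: "F a (- b) c = - F a b c" using F_add1[of a b "-b" c] by (simp add: F_zero1 eq_neg_iff_add_eq_0 add.commute)
lemma F_neg2: "F a b (- c) = - F a b c" using F_add2[of a b c "-c"] by (simp add: F_zero2 eq_neg_iff_add_eq_0 add.commute)

text \<open>T4 x a y b represents tr(x da y db).\<close>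
definition T4 :: "'a::ring_1 \<Rightarrow> 'a \<Rightarrow> 'a \<Rightarrow> 'a \<Rightarrow> 'a cf" where
  "T4 x a y b = F x (a * y) b - F (x * a) y b"

lemmas Fsimps = F_add0 F_add1 F_add2 F_zero0 F_zero1 F_zero2 F_neg0 F_neg1 F_neg2 F_unit1 F_unit2

lemma T4_add_x: "T4 (x + x') a y b = T4 x a y b + T4 x' a y b"
  by (simp add: T4_def Fsimps algebra_simps)
lemma T4_add_a: "T4 x (a + a') y b = T4 x a y b + T4 x a' y b"
  by (simp add: T4_def Fsimps algebra_simps)
lemma T4_add_y: "T4 x a (y + y') b = T4 x a y b + T4 x a y' b"
  by (simp add: T4_def Fsimps algebra_simps)
lemma T4_add_b: "T4 x a y (b + b') = T4 x a y b + T4 x a y b'"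
  by (simp add: T4_def Fsimps algebra_simps)
lemma T4_neg_x: "T4 (- x) a y b = - T4 x a y b"
  by (simp add: T4_def Fsimps algebra_simps)
lemma T4_neg_a: "T4 x (- a) y b = - T4 x a y b"
  by (simp add: T4_def Fsimps algebra_simps)
lemma T4_neg_y: "T4 x a (- y) b = - T4 x a y b"
  by (simp add: T4_def Fsimps algebra_simps)
lemma T4_neg_b: "T4 x a y (- b) = - T4 x a y b"
  by (simp add: T4_def Fsimps algebra_simps)
lemma T4_zero: "T4 0 a y b = 0" "T4 x 0 y b = 0" "T4 x a 0 b = 0" "T4 x a y 0 = 0"
  by (simp_all add: T4_def Fsimps)
lemma T4_one: "T4 x 1 y b = 0" "T4 x a y 1 = 0"
  by (simp_all add: T4_def Fsimps)
lemma T4_diff_x: "T4 (x - x') a y b = T4 x a y b - T4 x' a y b"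
  using T4_add_x[of x "-x'"] by (simp add: T4_neg_x)
lemma T4_diff_a: "T4 x (a - a') y b = T4 x a y b - T4 x a' y b"
  using T4_add_a[of x a "-a'"] by (simp add: T4_neg_a)
lemma T4_diff_y: "T4 x a (y - y') b = T4 x a y b - T4 x a y' b"
  using T4_add_y[of x a y "-y'"] by (simp add: T4_neg_y)
lemma T4_diff_b: "T4 x a y (b - b') = T4 x a y b - T4 x a y b'"
  using T4_add_b[of x a y b "-b'"] by (simp add: T4_neg_b)

lemma T4_La: "T4 x (a * c) y b = T4 x a (c * y) b + T4 (x * a) c y b"
  by (simp add: T4_def mult.assoc)

lemma T4_Lb: "T4 x a y (b * c) = T4 x a (y * b) c + T4 (c * x) a y b"
proof -
  have 1: "F (c * x) (a * y) b = F x (a * y) (b * c) - F x (a * y * b) c + F (x * (a * y)) b c"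
    by (rule F_comm02)
  have 2: "F (c * (x * a)) y b = F (x * a) y (b * c) - F (x * a) (y * b) c + F (x * a * y) b c"
    by (rule F_comm02)
  show ?thesis
    unfolding T4_def using 1 2 by (simp add: mult.assoc algebra_simps)
qed

lemma T4_swap: "T4 x a y b = - T4 y b x a"
  using F_comm11[of x a y b] unfolding T4_def by (simp add: algebra_simps)

lemma cls_curly: "cls (curly a b) = T4 (uinv b * uinv a) a 1 b"
proof -
  have "F (c * 1) a b = F 1 a (b * c) - F 1 (a * b) c + F (1 * a) b c" for c
    by (rule F_comm02)
  then show ?thesis
    unfolding curly_def dd_times_def T4_def
    by (simp add: cls_add cls_diff F_def[symmetric] Fsimps)
qed

lemma uinv_eq: "(x::'a::ring_1) * y = 1 \<Longrightarrow> y * x = 1 \<Longrightarrow> uinv x = y"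
proof -
  assume h: "x * y = 1" "y * x = 1"
  then have "\<exists>z. x * z = 1 \<and> z * x = 1" by blast
  then have "x * uinv x = 1 \<and> uinv x * x = 1" unfolding uinv_def by (rule someI_ex)
  then have "uinv x = uinv x * (x * y)" using h by simp
  also have "\<dots> = y" using \<open>x * uinv x = 1 \<and> uinv x * x = 1\<close> by (simp add: mult.assoc[symmetric])
  finally show ?thesis .
qed

lemma uinv_inv: "invertible x \<Longrightarrow> x * uinv x = 1 \<and> uinv x * x = 1"
  unfolding invertible_def uinv_def by (rule someI_ex)

lemma T4_inv_a: "u * v = 1 \<Longrightarrow> v * u = 1 \<Longrightarrow> T4 x u y b = - T4 (x * u) v (u * y) b"
proof -
  assume h: "u * v = 1" "v * u = 1"
  have e1: "T4 x (u * (v * u)) y b = T4 x u ((v * u) * y) b + T4 (x * u) (v * u) y b"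
    by (rule T4_La)
  have e2: "T4 (x * u) (v * u) y b = T4 (x * u) v (u * y) b + T4 (x * u * v) u y b"
    by (rule T4_La)
  have e3: "x * u * v = x" using h by (simp add: mult.assoc)
  have "T4 x u y b = T4 x u y b + T4 (x * u) v (u * y) b + T4 x u y b"
    using e1 e2 e3 h by (simp add: add.assoc)
  moreover have "True" by simp
  ultimately have "T4 x u y b + T4 (x * u) v (u * y) b = 0"
    by (metis add.commute add_cancel_right_right add.assoc)
  then show ?thesis by (simp add: eq_neg_iff_add_eq_0)
qed



lemma T4_inv_b: "u * v = 1 \<Longrightarrow> v * u = 1 \<Longrightarrow> T4 x a y u = - T4 (u * x) a (y * u) v"
proof -
  assume h: "u * v = 1" "v * u = 1"
  have "T4 x a y u = - T4 y u x a" by (rule T4_swap)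
  also have "T4 y u x a = - T4 (y * u) v (u * x) a" using h by (rule T4_inv_a)
  also have "T4 (y * u) v (u * x) a = - T4 (u * x) a (y * u) v" by (rule T4_swap)
  finally show ?thesis by simp
qed

theorem theorem4p12:
  fixes a1 a2 a3 a4 :: "'a::ring_1"
  defines "A1 \<equiv> a1 * a2 * a3 * a4"
      and "A2 \<equiv> a2 * a3 * a4 * a1"
      and "A3 \<equiv> a3 * a4 * a1 * a2"
      and "A4 \<equiv> a4 * a1 * a2 * a3"
  defines "b1 \<equiv> (1 + uinv A3) * a3"
      and "b2 \<equiv> uinv (1 + A4) * a4"
      and "b3 \<equiv> (1 + uinv A1) * a1"
      and "b4 \<equiv> uinv (1 + A2) * a2"
  assumes "invertible a1" and "invertible a2" and "invertible a3" and "invertible a4"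
      and "invertible (1 + A1)" and "invertible (1 + A2)"
      and "invertible (1 + A3)" and "invertible (1 + A4)"
  shows "cyc_eq (curly a4 a1 - curly a1 a2 + curly a2 a3 - curly a3 a4)
                (curly b1 b2 - curly b2 b3 + curly b3 b4 - curly b4 b1)"
proof -
  define i1 where "i1 = uinv a1"
  define i2 where "i2 = uinv a2"
  define i3 where "i3 = uinv a3"
  define i4 where "i4 = uinv a4"
  define u where "u = uinv (1 + A1)"
  have inv1: "a1 * i1 = 1" "i1 * a1 = 1" using uinv_inv[OF assms(9)] i1_def by auto
  have inv2: "a2 * i2 = 1" "i2 * a2 = 1" using uinv_inv[OF assms(10)] i2_def by auto
  have inv3: "a3 * i3 = 1" "i3 * a3 = 1" using uinv_inv[OF assms(11)] i3_def by auto
  have inv4: "a4 * i4 = 1" "i4 * a4 = 1" using uinv_inv[OF assms(12)] i4_def by auto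
  have invu: "u * (1 + a1 * (a2 * (a3 * a4))) = 1" "(1 + a1 * (a2 * (a3 * a4))) * u = 1"
    using uinv_inv[OF assms(13)] u_def A1_def by (auto simp: mult.assoc)
  have c1: "a1 * (i1 * w) = w" "i1 * (a1 * w) = w" for w
    using inv1 by (simp_all add: mult.assoc[symmetric])
  have c2: "a2 * (i2 * w) = w" "i2 * (a2 * w) = w" for w
    using inv2 by (simp_all add: mult.assoc[symmetric])
  have c3: "a3 * (i3 * w) = w" "i3 * (a3 * w) = w" for w
    using inv3 by (simp_all add: mult.assoc[symmetric])
  have c4: "a4 * (i4 * w) = w" "i4 * (a4 * w) = w" for w
    using inv4 by (simp_all add: mult.assoc[symmetric])
  note cc = inv1 inv2 inv3 inv4 c1 c2 c3 c4
  have uA: "u * (a1 * (a2 * (a3 * a4))) = 1 - u" "a1 * (a2 * (a3 * (a4 * u))) = 1 - u"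
    using invu by (simp_all add: algebra_simps)
  have uAi: "u * (i4 * (i3 * (i2 * i1))) = i4 * (i3 * (i2 * i1)) - u"
  proof -
    have "u * (i4 * (i3 * (i2 * i1))) + u = u * (1 + a1 * (a2 * (a3 * a4))) * (i4 * (i3 * (i2 * i1)))"
      by (simp add: algebra_simps cc)
    also have "\<dots> = i4 * (i3 * (i2 * i1))" using invu(1) by simp
    finally show ?thesis by (simp add: eq_diff_eq)
  qed
  have Aiu: "i4 * (i3 * (i2 * (i1 * u))) = i4 * (i3 * (i2 * i1)) - u"
  proof -
    have "i4 * (i3 * (i2 * (i1 * u))) + u = (i4 * (i3 * (i2 * i1))) * ((1 + a1 * (a2 * (a3 * a4))) * u)"
      by (simp add: algebra_simps cc)
    also have "\<dots> = i4 * (i3 * (i2 * i1))" using invu(2) by simp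
    finally show ?thesis by (simp add: eq_diff_eq)
  qed
  have R2: "u * (a1 * (a2 * (a3 * w))) = i4 * w - u * (i4 * w)" for w
  proof -
    have "u * (a1 * (a2 * (a3 * w))) = (u * (a1 * (a2 * (a3 * a4)))) * (i4 * w)"
      by (simp add: mult.assoc cc)
    then show ?thesis by (simp add: uA algebra_simps)
  qed
  have R2e: "u * (a1 * (a2 * a3)) = i4 - u * i4" using R2[of 1] by simp
  have R5: "u * (i4 * (i3 * w)) = i4 * (i3 * w) - u * (a1 * (a2 * w))" for w
  proof -
    have "u * (i4 * (i3 * w)) = (u * (i4 * (i3 * (i2 * i1)))) * (a1 * (a2 * w))"
      by (simp add: mult.assoc cc)
    then show ?thesis by (simp add: uAi algebra_simps cc)
  qed
  have R5e: "u * (i4 * i3) = i4 * i3 - u * (a1 * a2)" using R5[of 1] by simp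
  have L2: "a2 * (a3 * (a4 * (u * w))) = i1 * w - i1 * (u * w)" for w
  proof -
    have "a2 * (a3 * (a4 * (u * w))) = i1 * ((a1 * (a2 * (a3 * (a4 * u)))) * w)"
      by (simp add: mult.assoc cc)
    then show ?thesis by (simp add: uA algebra_simps)
  qed
  have L2e: "a2 * (a3 * (a4 * u)) = i1 - i1 * u" using L2[of 1] by simp
  have L5: "i2 * (i1 * (u * w)) = i2 * (i1 * w) - a3 * (a4 * (u * w))" for w
  proof -
    have "i2 * (i1 * (u * w)) = a3 * (a4 * ((i4 * (i3 * (i2 * (i1 * u)))) * w))"
      by (simp add: mult.assoc cc)
    then show ?thesis by (simp add: Aiu algebra_simps cc)
  qed
  have L5e: "i2 * (i1 * u) = i2 * i1 - a3 * (a4 * u)" using L5[of 1] by simp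
  note ur = R2 R2e R5 R5e L2 L2e L5 L5e
  note rs = mult.assoc distrib_left distrib_right left_diff_distrib right_diff_distrib
            mult_minus_left mult_minus_right cc ur
  have iA3: "uinv A3 = i2 * (i1 * (i4 * i3))"
    by (rule uinv_eq) (simp_all add: A3_def rs)
  have iA1: "uinv A1 = i4 * (i3 * (i2 * i1))"
    by (rule uinv_eq) (simp_all add: A1_def rs)
  have u4: "uinv (1 + A4) = a4 * (u * i4)"
    by (rule uinv_eq) (simp_all add: A4_def rs)
  have u2: "uinv (1 + A2) = i1 * (u * a1)"
    by (rule uinv_eq) (simp_all add: A2_def rs)
  have b1: "b1 = a3 + i2 * (i1 * i4)" by (simp add: b1_def iA3 rs)
  have b2: "b2 = a4 * u" by (simp add: b2_def u4 rs)
  have b3: "b3 = a1 + i4 * (i3 * i2)" by (simp add: b3_def iA1 rs)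
  have b4: "b4 = i1 * (u * (a1 * a2))" by (simp add: b4_def u2 rs)
  have ub1: "uinv b1 = a4 * (u * (a1 * a2))"
    by (rule uinv_eq) (simp_all add: b1 rs)
  have ub2: "uinv b2 = i4 + a1 * (a2 * a3)"
    by (rule uinv_eq) (simp_all add: b2 rs)
  have ub3: "uinv b3 = i1 - i1 * u"
    by (rule uinv_eq) (simp_all add: b3 rs)
  have ub4: "uinv b4 = i2 + a3 * (a4 * a1)"
    by (rule uinv_eq) (simp_all add: b4 rs)
  show ?thesis
    unfolding cls_eq_iff[symmetric]
    apply (simp only: cls_add cls_diff cls_curly ub1 ub2 ub3 ub4 i1_def[symmetric] i2_def[symmetric] i3_def[symmetric] i4_def[symmetric])
    apply (simp only: b1 b2 b3 b4)
    apply (simp add: rs T4_add_x T4_add_a T4_add_y T4_add_b T4_neg_x T4_neg_a T4_neg_y T4_neg_b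
       T4_diff_x T4_diff_a T4_diff_y T4_diff_b T4_zero T4_one T4_La T4_Lb
       T4_inv_a[of i1 a1, OF inv1(2) inv1(1)] T4_inv_a[of i2 a2, OF inv2(2) inv2(1)]
       T4_inv_a[of i3 a3, OF inv3(2) inv3(1)] T4_inv_a[of i4 a4, OF inv4(2) inv4(1)]
       T4_inv_b[of i1 a1, OF inv1(2) inv1(1)] T4_inv_b[of i2 a2, OF inv2(2) inv2(1)]
       T4_inv_b[of i3 a3, OF inv3(2) inv3(1)] T4_inv_b[of i4 a4, OF inv4(2) inv4(1)]
       T4_inv_a[of u, OF invu] T4_inv_b[of u, OF invu]
       T4_swap[of _ a2 _ a1] T4_swap[of _ a3 _ a1] T4_swap[of _ a4 _ a1]
       T4_swap[of _ a3 _ a2] T4_swap[of _ a4 _ a2] T4_swap[of _ a4 _ a3])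
    done
qed

end
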